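(* Let $\mathbb{M}_2$ be the $2\times2$ complex matrices, $E_{12}$ the standard matrix unit, and $\mathfrak{S}\subset\mathbb{M}_2$ the operator system spanned by $I,E_{12},E_{21}$. For a unit vector $\xi=\xi_1e_1+\xi_2e_2\in\mathbb{C}^2$ let $\omega_\xi(a)=\langle a\xi,\xi\rangle$. Then: if $\xi_1$ is not of the form $\alpha\overline{\xi_2}$ with $|\alpha|=1$, $\omega_\xi$ does not have the unique extension property with respect to $\mathfrak{S}$; if $\xi_1=\alpha\overline{\xi_2}$ with $|\alpha|=1$, $\omega_\xi$ is $\mathfrak{S}$-peaking. Consequently every pure state on $\mathbb{M}_2$ having the unique extension property with respect to $\mathfrak{S}$ is $\mathfrak{S}$-peaking, while not every pure state on $\mathbb{M}_2$ is $\mathfrak{S}$-peaking (even though every irreducible $*$-representation of $\mathbb{M}_2$ is $\mathfrak{S}$-peaking).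
   Context: A state $\psi$ on $\mathfrak{A}$ is $\mathfrak{S}$-peaking if there is a self-adjoint $s\in\mathfrak{S}$ with $\|s\|=1$ such that $\psi(s)=1>|\phi(s)|$ for every state $\phi\neq\psi$ on $\mathfrak{A}$. A state $\psi$ has the unique extension property with respect to $\mathfrak{S}$ if it is the only state on $\mathfrak{A}$ agreeing with $\psi$ on $\mathfrak{S}$. A unital $*$-representation $\pi$ is $\mathfrak{S}$-peaking if there is $s\in\mathfrak{S}$ with $\|\pi(s)\|>\|\rho(s)\|$ for every unital $*$-representation $\rho$ such that $\|\pi(a)\|\le\|\rho(a)\|$ fails for some $a$. *)

theory Defs
  imports "HOL-Analysis.Analysis"
begin

type_synonym cvec2 = "complex^2"
type_synonym mat2 = "complex^2^2"

definition cinner2 :: "cvec2 \<Rightarrow> cvec2 \<Rightarrow> complex" where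
  "cinner2 x y = (\<Sum>i\<in>UNIV. x$i * cnj (y$i))"

definition adj2 :: "mat2 \<Rightarrow> mat2" where
  "adj2 A = (\<chi> i j. cnj (A$j$i))"

definition smult2 :: "complex \<Rightarrow> mat2 \<Rightarrow> mat2" where
  "smult2 c A = (\<chi> i j. c * A$i$j)"

definition mnorm2 :: "mat2 \<Rightarrow> real" where
  "mnorm2 A = onorm (\<lambda>x::cvec2. A *v x)"

definition munit :: "2 \<Rightarrow> 2 \<Rightarrow> mat2" where
  "munit k l = (\<chi> i j. if i = k \<and> j = l then 1 else 0)"

definition E12 :: mat2 where "E12 = munit 1 2"
definition E21 :: mat2 where "E21 = munit 2 1"

definition opsysS :: "mat2 set" where
  "opsysS = {smult2 a (mat 1) + smult2 b E12 + smult2 c E21 | a b c. True}"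

definition positive2 :: "mat2 \<Rightarrow> bool" where
  "positive2 A \<longleftrightarrow> (\<forall>x. Im (cinner2 (A *v x) x) = 0 \<and> Re (cinner2 (A *v x) x) \<ge> 0)"

definition is_state :: "(mat2 \<Rightarrow> complex) \<Rightarrow> bool" where
  "is_state \<phi> \<longleftrightarrow>
     (\<forall>A B. \<phi> (A + B) = \<phi> A + \<phi> B) \<and>
     (\<forall>c A. \<phi> (smult2 c A) = c * \<phi> A) \<and>
     (\<forall>A. positive2 A \<longrightarrow> Im (\<phi> A) = 0 \<and> Re (\<phi> A) \<ge> 0) \<and>
     \<phi> (mat 1) = 1"

definition pure_state :: "(mat2 \<Rightarrow> complex) \<Rightarrow> bool" where
  "pure_state \<psi> \<longleftrightarrow> is_state \<psi> \<and>
     (\<forall>\<phi>1 \<phi>2 (t::real). is_state \<phi>1 \<and> is_state \<phi>2 \<and> 0 < t \<and> t < 1 \<and>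
        \<psi> = (\<lambda>A. of_real t * \<phi>1 A + of_real (1 - t) * \<phi>2 A) \<longrightarrow> \<phi>1 = \<psi> \<and> \<phi>2 = \<psi>)"

definition S_peaking_state :: "(mat2 \<Rightarrow> complex) \<Rightarrow> bool" where
  "S_peaking_state \<psi> \<longleftrightarrow> (\<exists>s\<in>opsysS. adj2 s = s \<and> mnorm2 s = 1 \<and> \<psi> s = 1 \<and>
      (\<forall>\<phi>. is_state \<phi> \<and> \<phi> \<noteq> \<psi> \<longrightarrow> cmod (\<phi> s) < 1))"

definition unique_ext_prop :: "(mat2 \<Rightarrow> complex) \<Rightarrow> bool" where
  "unique_ext_prop \<psi> \<longleftrightarrow> (\<forall>\<phi>. is_state \<phi> \<and> (\<forall>s\<in>opsysS. \<phi> s = \<psi> s) \<longrightarrow> \<phi> = \<psi>)"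

definition omega :: "cvec2 \<Rightarrow> mat2 \<Rightarrow> complex" where
  "omega \<xi> A = cinner2 (A *v \<xi>) \<xi>"

end

theory Submission
  imports Defs
begin


lemma norm2_sq: "(norm (x::cvec2))^2 = (cmod (x$1))^2 + (cmod (x$2))^2"
  by (simp add: norm_vec_def L2_set_def sum_2)

lemma mat_eq2: "(A::mat2) = B \<longleftrightarrow> A$1$1 = B$1$1 \<and> A$1$2 = B$1$2 \<and> A$2$1 = B$2$1 \<and> A$2$2 = B$2$2"
  by (auto simp: vec_eq_iff forall_2)

lemma vec_eq2: "(x::cvec2) = y \<longleftrightarrow> x$1 = y$1 \<and> x$2 = y$2"
  by (auto simp: vec_eq_iff forall_2)

lemma mv2: "((A::mat2) *v x)$1 = A$1$1 * x$1 + A$1$2 * x$2" "(A *v x)$2 = A$2$1 * x$1 + A$2$2 * x$2"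
  by (simp_all add: matrix_vector_mult_def sum_2)

lemma cinner2_eq: "cinner2 x y = x$1 * cnj (y$1) + x$2 * cnj (y$2)"
  by (simp add: cinner2_def sum_2)

lemma munit_simps: "munit k l $ i $ j = (if i = k \<and> j = l then 1 else 0)"
  by (simp add: munit_def)

lemma smult2_simps[simp]: "smult2 c A $ i $ j = c * A$i$j" by (simp add: smult2_def)
lemma adj2_simps[simp]: "adj2 A $ i $ j = cnj (A$j$i)" by (simp add: adj2_def)

lemma two_neq: "(1::2) \<noteq> 2" "(2::2) \<noteq> 1" by simp_all

lemma decomp: "(A::mat2) = smult2 (A$1$1) (munit 1 1) + smult2 (A$1$2) (munit 1 2) + smult2 (A$2$1) (munit 2 1) + smult2 (A$2$2) (munit 2 2)"
  by (simp add: mat_eq2 munit_simps)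

lemma state_repr:
  assumes "is_state \<phi>"
  shows "\<phi> A = A$1$1 * \<phi> (munit 1 1) + A$1$2 * \<phi> (munit 1 2) + A$2$1 * \<phi> (munit 2 1) + A$2$2 * \<phi> (munit 2 2)"
proof -
  from assms have add: "\<And>A B. \<phi> (A + B) = \<phi> A + \<phi> B" and sm: "\<And>c A. \<phi> (smult2 c A) = c * \<phi> A"
    by (auto simp: is_state_def)
  show ?thesis by (subst decomp) (simp add: add sm)
qed

definition proj :: "cvec2 \<Rightarrow> mat2" where "proj z = (\<chi> i j. z$i * cnj (z$j))"

lemma proj_pos: "positive2 (proj z)"
  unfolding positive2_def
proof
  fix x :: cvec2
  define u where "u = z$1 * cnj (x$1) + z$2 * cnj (x$2)"
  have "cinner2 (proj z *v x) x = u * cnj u"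
    by (simp add: cinner2_eq mv2 proj_def algebra_simps u_def)
  also have "\<dots> = complex_of_real ((cmod u)^2)" by (rule complex_norm_square[symmetric])
  finally show "Im (cinner2 (proj z *v x) x) = 0 \<and> 0 \<le> Re (cinner2 (proj z *v x) x)" by simp
qed

lemma proj_entries[simp]: "proj z $ i $ j = z$i * cnj (z$j)" by (simp add: proj_def)

lemma state_pos: "is_state \<phi> \<Longrightarrow> positive2 A \<Longrightarrow> Im (\<phi> A) = 0 \<and> Re (\<phi> A) \<ge> 0"
  by (simp add: is_state_def)

lemma state_params:
  assumes st: "is_state \<phi>"
  defines "p \<equiv> Re (\<phi> (munit 1 1))" and "q \<equiv> Re (\<phi> (munit 2 2))" and "w \<equiv> \<phi> (munit 1 2)"
  shows "\<phi> (munit 1 1) = of_real p" "\<phi> (munit 2 2) = of_real q" "p \<ge> 0" "q \<ge> 0" "p + q = 1"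
    "\<phi> (munit 2 1) = cnj w" "(cmod w)^2 \<le> p * q"
proof -
  note R = state_repr[OF st]
  have P: "Im (\<phi> (proj z)) = 0 \<and> Re (\<phi> (proj z)) \<ge> 0" for z
    using state_pos[OF st proj_pos] .
  have P1: "Im (\<phi> (munit 1 1)) = 0 \<and> Re (\<phi> (munit 1 1)) \<ge> 0"
    using P[of "vector [1,0]"] R[of "proj (vector [1,0])"] by simp
  have P2: "Im (\<phi> (munit 2 2)) = 0 \<and> Re (\<phi> (munit 2 2)) \<ge> 0"
    using P[of "vector [0,1]"] R[of "proj (vector [0,1])"] by simp
  show e1: "\<phi> (munit 1 1) = of_real p" using P1 by (simp add: p_def complex_eq_iff)
  show e2: "\<phi> (munit 2 2) = of_real q" using P2 by (simp add: q_def complex_eq_iff)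
  show "p \<ge> 0" "q \<ge> 0" using P1 P2 by (simp_all add: p_def q_def)
  have "\<phi> (mat 1) = 1" using st by (simp add: is_state_def)
  then have "\<phi> (munit 1 1) + \<phi> (munit 2 2) = 1" using R[of "mat 1"] by (simp add: mat_def)
  then show pq: "p + q = 1" using e1 e2 by (simp add: complex_eq_iff)
  have a: "Im (\<phi> (munit 1 1) + \<phi> (munit 1 2) + \<phi> (munit 2 1) + \<phi> (munit 2 2)) = 0"
    using P[of "vector [1,1]"] R[of "proj (vector [1,1])"] by simp
  have b: "Im (\<phi> (munit 1 1) - \<i> * \<phi> (munit 1 2) + \<i> * \<phi> (munit 2 1) + \<phi> (munit 2 2)) = 0"
    using P[of "vector [1,\<i>]"] R[of "proj (vector [1,\<i>])"] by simp
  show e3: "\<phi> (munit 2 1) = cnj w" using a b P1 P2 by (simp add: w_def complex_eq_iff)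
  have ww: "w * cnj w = of_real ((cmod w)^2)" by (rule complex_norm_square[symmetric])
  have "p * (p * q - (cmod w)^2) \<ge> 0"
  proof -
    have "\<phi> (proj (vector [- cnj w, of_real p])) = of_real (p * (p * q - (cmod w)^2))"
      using R[of "proj (vector [- cnj w, of_real p])"] e1 e2 e3 ww
      by (simp add: w_def[symmetric] power2_eq_square; algebra)
    then show ?thesis using P[of "vector [- cnj w, of_real p]"] by simp
  qed
  moreover have "q * (p * q - (cmod w)^2) \<ge> 0"
  proof -
    have "\<phi> (proj (vector [of_real q, - w])) = of_real (q * (p * q - (cmod w)^2))"
      using R[of "proj (vector [of_real q, - w])"] e1 e2 e3 ww
      by (simp add: w_def[symmetric] power2_eq_square; algebra)
    then show ?thesis using P[of "vector [of_real q, - w]"] by simp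
  qed
  ultimately show "(cmod w)^2 \<le> p * q" using pq \<open>p \<ge> 0\<close> \<open>q \<ge> 0\<close>
    by (smt (verit) mult_nonneg_nonneg zero_le_mult_iff)
qed

lemma omega_munit[simp]:
  "omega \<xi> (munit 1 1) = \<xi>$1 * cnj (\<xi>$1)" "omega \<xi> (munit 1 2) = \<xi>$2 * cnj (\<xi>$1)"
  "omega \<xi> (munit 2 1) = \<xi>$1 * cnj (\<xi>$2)" "omega \<xi> (munit 2 2) = \<xi>$2 * cnj (\<xi>$2)"
  by (simp_all add: omega_def cinner2_eq mv2 munit_simps)

lemma omega_state:
  assumes "norm \<xi> = 1" shows "is_state (omega \<xi>)"
proof -
  have "omega \<xi> (mat 1) = of_real ((cmod (\<xi>$1))^2) + of_real ((cmod (\<xi>$2))^2)"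
    by (simp add: omega_def cinner2_eq mv2 mat_def complex_norm_square[symmetric] del: of_real_power)
  also have "\<dots> = 1" using assms norm2_sq[of \<xi>] by (metis of_real_1 of_real_add power_one)
  finally have u: "omega \<xi> (mat 1) = 1" .
  show ?thesis unfolding is_state_def
    using u by (auto simp: omega_def cinner2_eq mv2 algebra_simps positive2_def mat_def)
qed

lemma state_ext:
  assumes "is_state \<phi>" "is_state \<theta>" "\<phi> (munit 1 1) = \<theta> (munit 1 1)" "\<phi> (munit 1 2) = \<theta> (munit 1 2)"
  shows "\<phi> = \<theta>"
proof
  fix A
  have "\<phi> (munit 2 2) = \<theta> (munit 2 2)"
    using state_params(1,2,5)[OF assms(1)] state_params(1,2,5)[OF assms(2)] assms(3)
    by (metis Re_complex_of_real add_diff_cancel_left')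
  moreover have "\<phi> (munit 2 1) = \<theta> (munit 2 1)"
    using state_params(6)[OF assms(1)] state_params(6)[OF assms(2)] assms(4) by simp
  ultimately show "\<phi> A = \<theta> A" using state_repr[OF assms(1), of A] state_repr[OF assms(2), of A] assms(3,4)
    by simp
qed

lemma state_agree_S:
  assumes "is_state \<phi>" "is_state \<theta>" "\<phi> (munit 1 2) = \<theta> (munit 1 2)" "s \<in> opsysS"
  shows "\<phi> s = \<theta> s"
proof -
  obtain a b c where s: "s = smult2 a (mat 1) + smult2 b E12 + smult2 c E21"
    using assms(4) by (auto simp: opsysS_def)
  have e: "s$1$1 = a" "s$2$2 = a" "s$1$2 = b" "s$2$1 = c"
    by (simp_all add: s mat_def E12_def E21_def munit_simps)
  have "\<phi> s = a * (\<phi> (munit 1 1) + \<phi> (munit 2 2)) + b * \<phi> (munit 1 2) + c * \<phi> (munit 2 1)"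
    using state_repr[OF assms(1), of s] e by (simp add: algebra_simps)
  also have "\<dots> = a + b * \<phi> (munit 1 2) + c * cnj (\<phi> (munit 1 2))"
    using state_params(1,2,5,6)[OF assms(1)] by (metis mult.right_neutral of_real_1 of_real_add)
  also have "\<dots> = \<theta> s"
  proof -
    have "\<theta> s = a * (\<theta> (munit 1 1) + \<theta> (munit 2 2)) + b * \<theta> (munit 1 2) + c * \<theta> (munit 2 1)"
      using state_repr[OF assms(2), of s] e by (simp add: algebra_simps)
    also have "\<dots> = a + b * \<theta> (munit 1 2) + c * cnj (\<theta> (munit 1 2))"
      using state_params(1,2,5,6)[OF assms(2)] by (metis mult.right_neutral of_real_1 of_real_add)
    finally show ?thesis using assms(3) by simp
  qed
  finally show ?thesis .
qed

lemma peaking_uep: "S_peaking_state \<psi> \<Longrightarrow> unique_ext_prop \<psi>"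
  unfolding S_peaking_state_def unique_ext_prop_def
  by (metis norm_one order_less_irrefl)


lemma cmod_sq_eq: "of_real ((cmod z)^2) = z * cnj z" by (rule complex_norm_square)

lemma peak_norm:
  fixes w :: complex
  assumes w: "cmod w = 1/2"
  defines "s \<equiv> smult2 (1/2) (mat 1) + smult2 (cnj w) E12 + smult2 w E21"
  shows "mnorm2 s = 1"
proof -
  have se: "s$1$1 = 1/2" "s$1$2 = cnj w" "s$2$1 = w" "s$2$2 = 1/2"
    by (simp_all add: s_def mat_def E12_def E21_def munit_simps)
  have w2: "(Re w)^2 + (Im w)^2 = 1/4"
  proof -
    have "(cmod w)^2 = 1/4" unfolding w by (simp add: power_divide)
    then show ?thesis using cmod_power2[of w] by simp
  qed
  have bnd: "norm (s *v x) \<le> 1 * norm x" for x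
  proof -
    have id0: "(norm (s *v x))^2 + ((cmod (x$1/2 - cnj w * x$2))^2 + (cmod (x$2/2 - w * x$1))^2) = (norm x)^2 * (1/2 + 2*((Re w)^2 + (Im w)^2))"
      unfolding norm2_sq cmod_power2 by (simp add: mv2 se power2_eq_square algebra_simps)
    have id: "(norm (s *v x))^2 + ((cmod (x$1/2 - cnj w * x$2))^2 + (cmod (x$2/2 - w * x$1))^2) = (norm x)^2"
      using id0 w2 by simp
    have "(norm (s *v x))^2 \<le> (norm x)^2" using id by (smt (verit) zero_le_power2)
    then show ?thesis by (simp add: power2_le_iff_abs_le)
  qed
  have "onorm (\<lambda>x. s *v x) \<le> 1" by (rule onorm_le) (use bnd in auto)
  moreover have "1 \<le> onorm (\<lambda>x. s *v x)"
  proof -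
    define x0 :: cvec2 where "x0 = vector [1, 2*w]"
    have ww: "w * cnj w = 1/4"
    proof -
      have "w * cnj w = of_real ((cmod w)^2)" by (rule cmod_sq_eq[symmetric])
      also have "\<dots> = 1/4" unfolding w by (simp add: power_divide)
      finally show ?thesis .
    qed
    have "s *v x0 = x0" unfolding vec_eq2 using ww by (simp add: x0_def mv2 se; algebra)
    moreover have "x0 \<noteq> 0" by (metis x0_def vector_2(1) zero_index zero_neq_one)
    ultimately show ?thesis using onorm[OF matrix_vector_mul_bounded_linear[of s], of x0]
      by simp
  qed
  ultimately show ?thesis unfolding mnorm2_def by simp
qed

lemma peak_lemma:
  assumes st: "is_state \<phi>" and p: "Re (\<phi> (munit 1 1)) = 1/2" and w: "cmod (\<phi> (munit 1 2)) = 1/2"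
  shows "S_peaking_state \<phi>"
proof -
  define w where "w = \<phi> (munit 1 2)"
  have wn: "cmod w = 1/2" using w w_def by simp
  define s where "s = smult2 (1/2) (mat 1) + smult2 (cnj w) E12 + smult2 w E21"
  have se: "s$1$1 = 1/2" "s$1$2 = cnj w" "s$2$1 = w" "s$2$2 = 1/2"
    by (simp_all add: s_def mat_def E12_def E21_def munit_simps)
  have ww: "w * cnj w = 1/4"
  proof -
    have "w * cnj w = of_real ((cmod w)^2)" by (rule cmod_sq_eq[symmetric])
    also have "\<dots> = 1/4" unfolding wn by (simp add: power_divide)
    finally show ?thesis .
  qed
  have sS: "s \<in> opsysS" unfolding opsysS_def s_def by blast
  have sa: "adj2 s = s" unfolding mat_eq2 by (simp add: se)
  have sn: "mnorm2 s = 1" unfolding s_def by (rule peak_norm[OF wn])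
  have val: "\<theta> s = of_real (1/2 + 2 * Re (cnj w * \<theta> (munit 1 2)))" if th: "is_state \<theta>" for \<theta>
  proof -
    note P = state_params[OF th]
    have "\<theta> s = 1/2 * (\<theta> (munit 1 1) + \<theta> (munit 2 2)) + (cnj w * \<theta> (munit 1 2) + cnj (cnj w * \<theta> (munit 1 2)))"
      using state_repr[OF th, of s] P(6) by (simp add: se algebra_simps)
    also have "\<theta> (munit 1 1) + \<theta> (munit 2 2) = 1" using P(1,2,5) by (metis of_real_1 of_real_add)
    also have "z + cnj z = of_real (2 * Re z)" for z by (simp add: complex_add_cnj)
    finally show ?thesis by simp
  qed
  have ph1: "\<phi> s = 1" using val[OF st] ww unfolding w_def[symmetric]
    by (simp add: mult.commute)
  have other: "cmod (\<theta> s) < 1" if th: "is_state \<theta>" and ne: "\<theta> \<noteq> \<phi>" for \<theta>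
  proof (rule ccontr)
    assume c: "\<not> cmod (\<theta> s) < 1"
    note P = state_params[OF th]
    define p' where "p' = Re (\<theta> (munit 1 1))"
    define q' where "q' = Re (\<theta> (munit 2 2))"
    define w' where "w' = \<theta> (munit 1 2)"
    define z where "z = cnj w * w'"
    have cz: "cmod z = cmod w' / 2" by (simp add: z_def norm_mult wn)
    have pq: "p' + q' = 1" "p' \<ge> 0" "q' \<ge> 0" "(cmod w')^2 \<le> p' * q'" using P unfolding p'_def q'_def w'_def by auto
    have sq: "4 * (p' * q') = (p' + q')^2 - (p' - q')^2" by (simp add: power2_eq_square algebra_simps)
    have s1: "(p' + q')^2 = 1" using pq(1) by simp
    have s0: "0 \<le> (p' - q')^2" by simp
    have pq4: "p' * q' \<le> 1/4" using sq s1 s0 by linarith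
    have "cmod w' \<le> 1/2"
    proof -
      have "(cmod w')^2 \<le> (1/2)^2" using pq pq4 by (simp add: power_divide)
      then show ?thesis by (simp add: power2_le_iff_abs_le)
    qed
    then have cz4: "cmod z \<le> 1/4" using cz by simp
    have "\<bar>Re z\<bar> \<le> cmod z" by (rule abs_Re_le_cmod)
    have ts: "\<theta> s = of_real (1/2 + 2 * Re z)" using val[OF th] by (simp add: z_def w'_def)
    have "cmod (\<theta> s) = \<bar>1/2 + 2 * Re z\<bar>" unfolding ts by (rule norm_of_real)
    then have "\<bar>1/2 + 2 * Re z\<bar> \<ge> 1" using c by linarith
    then have rz: "Re z = 1/4" using cz4 \<open>\<bar>Re z\<bar> \<le> cmod z\<close> by linarith
    have "(cmod z)^2 = (Re z)^2 + (Im z)^2" by (rule cmod_power2)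
    moreover have "(cmod z)^2 \<le> (1/4)^2" using cz4 by (rule power_mono) simp
    ultimately have "(Im z)^2 \<le> 0" using rz by (simp add: power_divide)
    then have iz: "Im z = 0" by simp
    have z4: "z = 1/4" using rz iz by (simp add: complex_eq_iff)
    have cw: "cmod w' = 1/2" using cz z4 by simp
    have "(cmod w')^2 = 1/4" unfolding cw by (simp add: power_divide)
    then have "p' * q' \<ge> 1/4" using pq(4) by linarith
    then have "(p' - q')^2 \<le> 0" using sq s1 by linarith
    then have "p' - q' = 0" by simp
    then have p'h: "p' = 1/2" using pq(1) by linarith
    have zz: "cnj w * w' = 1/4" using z4 z_def by simp
    have "w' = w" using zz ww by algebra
    then have e12: "\<theta> (munit 1 2) = \<phi> (munit 1 2)" unfolding w'_def w_def .
    have "\<theta> (munit 1 1) = of_real (1/2)" using P(1) p'h unfolding p'_def by simp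
    moreover have "\<phi> (munit 1 1) = of_real (1/2)" using state_params(1)[OF st] p by simp
    ultimately have "\<theta> (munit 1 1) = \<phi> (munit 1 1)" by (rule trans[OF _ sym])
    then have "\<theta> = \<phi>" using state_ext[OF th st _ e12] by blast
    then show False using ne by simp
  qed
  show ?thesis unfolding S_peaking_state_def
    using sS sa sn ph1 other by blast
qed

lemma vec_exists:
  assumes r0: "0 \<le> r" and r1: "r \<le> 1" and wr: "(cmod w)^2 = r * (1 - r)"
  shows "\<exists>\<eta>::cvec2. norm \<eta> = 1 \<and> \<eta>$1 * cnj (\<eta>$1) = of_real r \<and> \<eta>$2 * cnj (\<eta>$1) = w"
proof (cases "r = 0")
  case True
  then have "w = 0" using wr by simp
  moreover have "norm (vector [0, 1] :: cvec2) = 1"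
  proof -
    have "(norm (vector [0, 1] :: cvec2))^2 = 1" by (simp add: norm2_sq)
    then show ?thesis by (simp add: power2_eq_1_iff) (metis norm_ge_zero neg_0_le_iff_le not_one_le_zero)
  qed
  ultimately show ?thesis using True by (intro exI[of _ "vector [0, 1]"]) simp
next
  case False
  then have rp: "r > 0" using r0 by simp
  define sr where "sr = sqrt r"
  have srp: "sr > 0" using rp by (simp add: sr_def)
  have srr: "sr * sr = r" using r0 by (simp add: sr_def)
  define \<eta> :: cvec2 where "\<eta> = vector [of_real sr, w / of_real sr]"
  have sr2: "sr^2 = r" using srr by (simp add: power2_eq_square)
  have "(norm \<eta>)^2 = sr^2 + (cmod w)^2 / sr^2"
    by (simp add: norm2_sq \<eta>_def norm_divide power_divide)
  also have "\<dots> = 1" unfolding sr2 wr using rp by simp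
  finally have "norm \<eta> = 1" by (simp add: power2_eq_1_iff) (metis norm_ge_zero neg_0_le_iff_le not_one_le_zero)
  moreover have "\<eta>$1 * cnj (\<eta>$1) = of_real r" unfolding \<eta>_def using srr by (simp flip: of_real_mult)
  moreover have "\<eta>$2 * cnj (\<eta>$1) = w" unfolding \<eta>_def using srp by simp
  ultimately show ?thesis by blast
qed

lemma uep_params:
  assumes st: "is_state \<phi>" and u: "unique_ext_prop \<phi>"
  shows "Re (\<phi> (munit 1 1)) = 1/2 \<and> cmod (\<phi> (munit 1 2)) = 1/2"
proof (rule ccontr)
  assume nc: "\<not> ?thesis"
  define p where "p = Re (\<phi> (munit 1 1))"
  define q where "q = Re (\<phi> (munit 2 2))"
  define w where "w = \<phi> (munit 1 2)"
  note P = state_params[OF st, folded p_def q_def w_def]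
  have sq: "4 * (p * q) = (p + q)^2 - (p - q)^2" by (simp add: power2_eq_square algebra_simps)
  have s1: "(p + q)^2 = 1" using P(5) by simp
  have s0: "0 \<le> (p - q)^2" by simp
  have pq4: "p * q \<le> 1/4" using sq s1 s0 by linarith
  define d where "d = sqrt (1 - 4 * (cmod w)^2)"
  have arg: "0 \<le> 1 - 4 * (cmod w)^2" "1 - 4 * (cmod w)^2 \<le> 1" using P(7) pq4 by auto
  have d0: "0 \<le> d" "d \<le> 1" using arg by (auto simp: d_def)
  have dd: "d * d = 1 - 4 * (cmod w)^2" using arg by (simp add: d_def)
  obtain r where r: "0 \<le> r" "r \<le> 1" "(cmod w)^2 = r * (1 - r)" "r \<noteq> p"
  proof (cases "p = (1 + d)/2")
    case True
    show ?thesis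
    proof (rule that[of "(1 - d)/2"])
      show "0 \<le> (1 - d)/2" "(1 - d)/2 \<le> 1" using d0 by auto
      show "(cmod w)^2 = (1 - d)/2 * (1 - (1 - d)/2)" using dd by (simp add: field_simps power2_eq_square)
      show "(1 - d)/2 \<noteq> p"
      proof
        assume "(1 - d)/2 = p"
        then have "d = 0" using True by simp
        then have c2: "(cmod w)^2 = (1/2)^2" and "p = 1/2" using dd True by (simp_all add: power_divide)
        moreover have "cmod w = 1/2" using c2 by (subst (asm) power2_eq_iff_nonneg) auto
        ultimately show False using nc unfolding p_def w_def by simp
      qed
    qed
  next
    case False
    show ?thesis
    proof (rule that[of "(1 + d)/2"])
      show "0 \<le> (1 + d)/2" "(1 + d)/2 \<le> 1" using d0 by auto
      show "(cmod w)^2 = (1 + d)/2 * (1 - (1 + d)/2)" using dd by (simp add: field_simps power2_eq_square)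
      show "(1 + d)/2 \<noteq> p" using False by simp
    qed
  qed
  obtain \<eta> :: cvec2 where eta: "norm \<eta> = 1" "\<eta>$1 * cnj (\<eta>$1) = of_real r" "\<eta>$2 * cnj (\<eta>$1) = w"
    using vec_exists[OF r(1-3)] by blast
  have ost: "is_state (omega \<eta>)" by (rule omega_state[OF eta(1)])
  have "\<forall>s\<in>opsysS. omega \<eta> s = \<phi> s"
    using state_agree_S[OF ost st] eta(3) unfolding w_def by simp
  then have "omega \<eta> = \<phi>" using u ost unfolding unique_ext_prop_def by blast
  then have "of_real r = \<phi> (munit 1 1)" using eta(2) by (metis omega_munit(1))
  then have "r = p" unfolding p_def by (metis Re_complex_of_real)
  then show False using r(4) by simp
qed

definition e1 :: cvec2 where "e1 = vector [1, 0]"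

lemma e1_norm: "norm e1 = 1"
proof -
  have "(norm e1)^2 = 1" by (simp add: norm2_sq e1_def)
  then show ?thesis by (simp add: power2_eq_1_iff) (metis norm_ge_zero neg_0_le_iff_le not_one_le_zero)
qed

lemma e1_unique:
  assumes st: "is_state \<theta>" and p: "Re (\<theta> (munit 1 1)) = 1"
  shows "\<theta> = omega e1"
proof -
  note P = state_params[OF st]
  have q: "Re (\<theta> (munit 2 2)) = 0" using P(5) p by simp
  have "(cmod (\<theta> (munit 1 2)))^2 \<le> 0" using P(7) p q by simp
  then have w: "\<theta> (munit 1 2) = 0" by simp
  have "\<theta> (munit 1 1) = 1" using P(1) p by simp
  then show ?thesis using state_ext[OF st omega_state[OF e1_norm]] w by (simp add: e1_def)
qed

lemma e1_pure: "pure_state (omega e1)"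
  unfolding pure_state_def
proof (intro conjI allI impI)
  show st: "is_state (omega e1)" by (rule omega_state[OF e1_norm])
  fix \<phi>1 \<phi>2 and t :: real
  assume a: "is_state \<phi>1 \<and> is_state \<phi>2 \<and> 0 < t \<and> t < 1 \<and> omega e1 = (\<lambda>A. of_real t * \<phi>1 A + of_real (1 - t) * \<phi>2 A)"
  then have s1: "is_state \<phi>1" and s2: "is_state \<phi>2" and t: "0 < t" "t < 1" by auto
  have "omega e1 (munit 1 1) = of_real t * \<phi>1 (munit 1 1) + of_real (1 - t) * \<phi>2 (munit 1 1)"
    using a by simp
  then have "1 = Re (of_real t * \<phi>1 (munit 1 1) + of_real (1 - t) * \<phi>2 (munit 1 1))"
    by (simp add: e1_def)
  then have eq: "1 = t * Re (\<phi>1 (munit 1 1)) + (1 - t) * Re (\<phi>2 (munit 1 1))" by simp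
  define p1 where "p1 = Re (\<phi>1 (munit 1 1))"
  define p2 where "p2 = Re (\<phi>2 (munit 1 1))"
  have p1: "p1 \<le> 1" using state_params(4,5)[OF s1] unfolding p1_def by linarith
  have p2: "p2 \<le> 1" using state_params(4,5)[OF s2] unfolding p2_def by linarith
  have e: "t * (1 - p1) + (1 - t) * (1 - p2) = 0" using eq unfolding p1_def[symmetric] p2_def[symmetric]
    by (simp add: algebra_simps)
  have n1: "t * (1 - p1) \<ge> 0" using t p1 by simp
  have n2: "(1 - t) * (1 - p2) \<ge> 0" using t p2 by simp
  have "t * (1 - p1) = 0" using e n1 n2 by linarith
  then have "p1 = 1" using t by simp
  moreover have "(1 - t) * (1 - p2) = 0" using e n1 n2 by linarith
  then have "p2 = 1" using t by simp
  ultimately show "\<phi>1 = omega e1" "\<phi>2 = omega e1"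
    using e1_unique[OF s1] e1_unique[OF s2] unfolding p1_def p2_def by auto
qed


lemma cmod_sq_re: "Re (z * cnj z) = (cmod z)^2"
  using complex_norm_square[of z] by (metis Re_complex_of_real)

theorem mainTheorem9:
  shows "(\<forall>\<xi>::cvec2. norm \<xi> = 1 \<longrightarrow>
            \<not> (\<exists>\<alpha>. cmod \<alpha> = 1 \<and> \<xi>$1 = \<alpha> * cnj (\<xi>$2)) \<longrightarrow>
            \<not> unique_ext_prop (omega \<xi>))
       \<and> (\<forall>(\<xi>::cvec2) \<alpha>. norm \<xi> = 1 \<longrightarrow> cmod \<alpha> = 1 \<longrightarrow> \<xi>$1 = \<alpha> * cnj (\<xi>$2) \<longrightarrow>
            S_peaking_state (omega \<xi>))
       \<and> (\<forall>\<psi>. pure_state \<psi> \<and> unique_ext_prop \<psi> \<longrightarrow> S_peaking_state \<psi>)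
       \<and> \<not> (\<forall>\<psi>. pure_state \<psi> \<longrightarrow> S_peaking_state \<psi>)"
proof (intro conjI allI impI)
  fix \<xi> :: cvec2
  assume n: "norm \<xi> = 1" and na: "\<not> (\<exists>\<alpha>. cmod \<alpha> = 1 \<and> \<xi>$1 = \<alpha> * cnj (\<xi>$2))"
  show "\<not> unique_ext_prop (omega \<xi>)"
  proof
    assume u: "unique_ext_prop (omega \<xi>)"
    have "Re (omega \<xi> (munit 1 1)) = 1/2"
      using uep_params[OF omega_state[OF n] u] by blast
    then have a1: "(cmod (\<xi>$1))^2 = 1/2" unfolding omega_munit cmod_sq_re .
    have "(norm \<xi>)^2 = 1" using n by simp
    then have a2: "(cmod (\<xi>$2))^2 = 1/2" using a1 norm2_sq[of \<xi>] by simp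
    have "(cmod (\<xi>$1))^2 = (cmod (\<xi>$2))^2" using a1 a2 by linarith
    then have eqm: "cmod (\<xi>$1) = cmod (\<xi>$2)" using power2_eq_iff_nonneg[OF norm_ge_zero norm_ge_zero] by blast
    have nz: "\<xi>$2 \<noteq> 0" using a2 by auto
    define \<alpha> where "\<alpha> = \<xi>$1 / cnj (\<xi>$2)"
    have "cmod \<alpha> = 1" using eqm nz by (simp add: \<alpha>_def norm_divide)
    moreover have "\<xi>$1 = \<alpha> * cnj (\<xi>$2)" using nz by (simp add: \<alpha>_def)
    ultimately show False using na by blast
  qed
next
  fix \<xi> :: cvec2 and \<alpha> :: complex
  assume n: "norm \<xi> = 1" and a: "cmod \<alpha> = 1" and e: "\<xi>$1 = \<alpha> * cnj (\<xi>$2)"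
  have eqm: "cmod (\<xi>$1) = cmod (\<xi>$2)" using a e by (simp add: norm_mult)
  have "(norm \<xi>)^2 = 1" using n by simp
  then have a1: "(cmod (\<xi>$1))^2 = 1/2" using eqm norm2_sq[of \<xi>] by simp
  have p: "Re (omega \<xi> (munit 1 1)) = 1/2" unfolding omega_munit cmod_sq_re using a1 .
  have "cmod (omega \<xi> (munit 1 2)) = (cmod (\<xi>$1))^2" using eqm by (simp add: norm_mult power2_eq_square)
  then have w: "cmod (omega \<xi> (munit 1 2)) = 1/2" using a1 by simp
  show "S_peaking_state (omega \<xi>)" by (rule peak_lemma[OF omega_state[OF n] p w])
next
  fix \<psi>
  assume a: "pure_state \<psi> \<and> unique_ext_prop \<psi>"
  then have st: "is_state \<psi>" by (simp add: pure_state_def)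
  show "S_peaking_state \<psi>" using uep_params[OF st] a peak_lemma[OF st] by blast
next
  show "\<not> (\<forall>\<psi>. pure_state \<psi> \<longrightarrow> S_peaking_state \<psi>)"
  proof
    assume "\<forall>\<psi>. pure_state \<psi> \<longrightarrow> S_peaking_state \<psi>"
    then have "unique_ext_prop (omega e1)" using e1_pure peaking_uep by blast
    then have "Re (omega e1 (munit 1 1)) = 1/2" using uep_params[OF omega_state[OF e1_norm]] by blast
    then show False by (simp add: e1_def)
  qed
qed

end
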